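(* Assume CH. There exists a Luzin set $L\subseteq\mathbb{R}$ such that $L+L=\{a+b:a,b\in L\}$ is a Bernstein set.
   Context: A Luzin set is a set $L\subseteq\mathbb{R}$ with $|L|=\mathfrak{c}$ such that $L\cap M$ is countable for every meager $M\subseteq\mathbb{R}$. A set $B\subseteq\mathbb{R}$ is a Bernstein set if for every nonempty perfect set $P\subseteq\mathbb{R}$ both $B\cap P\neq\emptyset$ and $(\mathbb{R}\setminus B)\cap P\neq\emptyset$. *)

theory Defs
  imports "HOL-Analysis.Analysis" "HOL-Library.Equipollence"
begin

definition CH :: bool where
  "CH \<longleftrightarrow> (\<forall>A::real set. countable A \<or> A \<approx> (UNIV::real set))"

definition nowhere_dense :: "real set \<Rightarrow> bool" where
  "nowhere_dense A \<longleftrightarrow> interior (closure A) = {}"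

definition meager :: "real set \<Rightarrow> bool" where
  "meager M \<longleftrightarrow> (\<exists>N :: nat \<Rightarrow> real set. (\<forall>n. nowhere_dense (N n)) \<and> M \<subseteq> (\<Union>n. N n))"

definition perfect_set :: "real set \<Rightarrow> bool" where
  "perfect_set P \<longleftrightarrow> closed P \<and> (\<forall>x\<in>P. x islimpt P)"

definition Luzin_set :: "real set \<Rightarrow> bool" where
  "Luzin_set L \<longleftrightarrow> L \<approx> (UNIV::real set) \<and> (\<forall>M. meager M \<longrightarrow> countable (L \<inter> M))"

definition Bernstein_set :: "real set \<Rightarrow> bool" where
  "Bernstein_set B \<longleftrightarrow> (\<forall>P. perfect_set P \<and> P \<noteq> {} \<longrightarrow> B \<inter> P \<noteq> {} \<and> (UNIV - B) \<inter> P \<noteq> {})"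

definition sumset :: "real set \<Rightarrow> real set \<Rightarrow> real set" where
  "sumset A B = {a + b | a b. a \<in> A \<and> b \<in> B}"

end

theory Submission
  imports Defs
begin

definition smeager :: "real set \<Rightarrow> bool" where
  "smeager M \<longleftrightarrow> (\<exists>G. countable G \<and> (\<forall>T\<in>G. closed T \<and> interior T = {}) \<and> M \<subseteq> \<Union>G)"

lemma smeagerE:
  assumes "smeager M"
  obtains G where "countable G" "\<And>T. T\<in>G \<Longrightarrow> closed T" "\<And>T. T\<in>G \<Longrightarrow> interior T = {}" "M \<subseteq> \<Union>G"
proof -
  from assms obtain G where G: "countable G \<and> (\<forall>T\<in>G. closed T \<and> interior T = {}) \<and> M \<subseteq> \<Union>G"
    unfolding smeager_def by (rule exE)
  show ?thesis
  proof (rule that)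
    show "countable G" using G by (rule conjunct1)
    show "M \<subseteq> \<Union>G" using G by (simp only:)
    fix T assume "T \<in> G"
    then show "closed T" "interior T = {}" using G by simp_all
  qed
qed

lemma smeagerI:
  assumes "countable G" "\<And>T. T\<in>G \<Longrightarrow> closed T" "\<And>T. T\<in>G \<Longrightarrow> interior T = {}" "M \<subseteq> \<Union>G"
  shows "smeager M"
  unfolding smeager_def using assms by (intro exI[of _ G]) simp

lemma not_smeager_UNIV: "\<not> smeager UNIV"
proof
  assume "smeager UNIV"
  then show False
  proof (rule smeagerE)
  fix G :: "real set set" assume G: "countable G" "\<And>T. T\<in>G \<Longrightarrow> closed T" "\<And>T. T\<in>G \<Longrightarrow> interior T = {}" "UNIV \<subseteq> \<Union>G"
  have cm: "completely_metrizable_space (euclidean::real topology)"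
    by (rule completely_metrizable_space_euclidean)
  have ct: "closedin euclidean T \<and> euclidean interior_of T = {}" if "T \<in> G" for T
    using G(2)[OF that] G(3)[OF that] by (simp add: closed_closedin[symmetric])
  have "euclidean interior_of \<Union>G = {}"
    apply (rule Baire_category_alt)
      apply (rule disjI1, rule cm)
     apply (rule G(1))
    apply (rule ct, assumption)
    done
  moreover have "\<Union>G = UNIV" using G(4) by (rule subset_antisym[OF subset_UNIV])
  ultimately show False by simp
  qed
qed


lemma smeager_mono: "smeager M \<Longrightarrow> N \<subseteq> M \<Longrightarrow> smeager N"
  unfolding smeager_def by (meson order_trans)

lemma smeager_Un: assumes "smeager M" "smeager N" shows "smeager (M \<union> N)"
proof -
  obtain G :: "real set set" where G: "countable G" "\<And>T. T\<in>G \<Longrightarrow> closed T" "\<And>T. T\<in>G \<Longrightarrow> interior T = {}" "M \<subseteq> \<Union>G"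
    using assms(1) by (rule smeagerE) blast
  obtain H :: "real set set" where H: "countable H" "\<And>T. T\<in>H \<Longrightarrow> closed T" "\<And>T. T\<in>H \<Longrightarrow> interior T = {}" "N \<subseteq> \<Union>H"
    using assms(2) by (rule smeagerE) blast
  show ?thesis
  proof (rule smeagerI[of "G \<union> H"])
    show "countable (G \<union> H)" using G(1) H(1) by simp
    show "M \<union> N \<subseteq> \<Union>(G \<union> H)" using G(4) H(4) by blast
    fix T assume "T \<in> G \<union> H"
    then show "closed T" "interior T = {}" using G(2,3) H(2,3) by blast+
  qed
qed

lemma smeager_UN:
  assumes "countable K" "\<And>k. k \<in> K \<Longrightarrow> smeager (M k)"
  shows "smeager (\<Union>k\<in>K. M k)"
proof -
  have "\<forall>k\<in>K. \<exists>G. countable G \<and> (\<forall>T\<in>G. closed T \<and> interior T = {}) \<and> M k \<subseteq> \<Union>G"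
    using assms(2) unfolding smeager_def by simp
  then obtain G where G: "\<And>k. k\<in>K \<Longrightarrow> countable (G k) \<and> (\<forall>T\<in>G k. closed T \<and> interior T = {}) \<and> M k \<subseteq> \<Union>(G k)"
    by metis
  show ?thesis
  proof (rule smeagerI[of "\<Union>k\<in>K. G k"])
    show "countable (\<Union>k\<in>K. G k)" using assms(1) G by simp
    show "(\<Union>k\<in>K. M k) \<subseteq> \<Union>(\<Union>k\<in>K. G k)"
    proof
      fix x assume "x \<in> (\<Union>k\<in>K. M k)"
      then obtain k where k: "k \<in> K" "x \<in> M k" by blast
      then have "x \<in> \<Union>(G k)" using G[OF k(1)] by blast
      then show "x \<in> \<Union>(\<Union>k\<in>K. G k)" using k(1) by blast
    qed
    fix T assume "T \<in> (\<Union>k\<in>K. G k)"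
    then obtain k where "k \<in> K" "T \<in> G k" by blast
    then show "closed T" "interior T = {}" using G by blast+
  qed
qed

lemma smeager_countable: "countable C \<Longrightarrow> smeager C"
  by (rule smeagerI[of "(\<lambda>t. {t}) ` C"]) auto

lemma smeager_reflect: 
  assumes "smeager M" shows "smeager ((\<lambda>t. p - t) ` M)"
proof -
  obtain G :: "real set set" where G: "countable G" "\<And>T. T\<in>G \<Longrightarrow> closed T" "\<And>T. T\<in>G \<Longrightarrow> interior T = {}" "M \<subseteq> \<Union>G"
    using assms by (rule smeagerE) blast
  have eq: "(\<lambda>t. p - t) ` T = (+) p ` (uminus ` T)" for T :: "real set"
    by (auto simp: image_image)
  have cl: "closed ((\<lambda>t. p - t) ` T)" "interior ((\<lambda>t. p - t) ` T) = {}" if "T \<in> G" for T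
    using G(2)[OF that] G(3)[OF that] unfolding eq
    by (simp_all add: interior_translation interior_negations closed_translation closed_negations)
  show ?thesis
  proof (rule smeagerI[of "(\<lambda>T. (\<lambda>t. p - t) ` T) ` G"])
    show "countable ((\<lambda>T. (\<lambda>t. p - t) ` T) ` G)" using G by simp
    fix T assume "T \<in> (\<lambda>T. (\<lambda>t. p - t) ` T) ` G"
    then obtain T0 where "T0 \<in> G" "T = (\<lambda>t. p - t) ` T0" by blast
    then show "closed T" "interior T = {}" using cl by auto
  next
    show "(\<lambda>t. p - t) ` M \<subseteq> \<Union> ((\<lambda>T. (\<lambda>t. p - t) ` T) ` G)"
    proof
      fix y assume "y \<in> (\<lambda>t. p - t) ` M"
      then obtain t where t: "t \<in> M" "y = p - t" by blast
      then obtain T where T: "T \<in> G" "t \<in> T" using G(4) by blast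
      then have "y \<in> (\<lambda>t. p - t) ` T" using t by blast
      then show "y \<in> \<Union> ((\<lambda>T. (\<lambda>t. p - t) ` T) ` G)" using T by blast
    qed
  qed
qed

lemma meager_smeager: 
  assumes "meager M" shows "smeager M"
proof -
  obtain N :: "nat \<Rightarrow> real set" where N: "\<And>n. nowhere_dense (N n)" "M \<subseteq> (\<Union>n. N n)"
    using assms unfolding meager_def by blast
  show ?thesis
  proof (rule smeagerI[of "range (\<lambda>n. closure (N n))"])
    show "countable (range (\<lambda>n. closure (N n)))" by simp
    show "M \<subseteq> \<Union> (range (\<lambda>n. closure (N n)))"
    proof
      fix x assume "x \<in> M"
      then obtain n where "x \<in> N n" using N(2) by blast
      then have "x \<in> closure (N n)" using closure_subset[of "N n"] by blast
      then show "x \<in> \<Union> (range (\<lambda>n. closure (N n)))" by blast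
    qed
    fix T assume "T \<in> range (\<lambda>n. closure (N n))"
    then obtain n where "T = closure (N n)" by blast
    then show "closed T" "interior T = {}" using N(1)[of n] by (simp_all add: nowhere_dense_def)
  qed
qed

lemma perfect_uncountable:
  assumes "perfect_set P" "P \<noteq> {}" shows "uncountable P"
proof
  assume cP: "countable P"
  have cl: "closed P" and lim: "\<And>x. x \<in> P \<Longrightarrow> x islimpt P" using assms unfolding perfect_set_def by auto
  let ?X = "top_of_set P"
  have cm: "completely_metrizable_space ?X"
    by (rule completely_metrizable_space_closedin[OF completely_metrizable_space_euclidean cl[unfolded closed_closedin]])
  have ct: "closedin ?X T \<and> ?X interior_of T = {}" if Tin: "T \<in> (\<lambda>t. {t}) ` P" for T
  proof -
    obtain t where t: "t \<in> P" "T = {t}" using Tin by blast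
    have "closedin ?X T" using t closedin_closed_Int[of "{t}" P] by auto
    moreover have "?X interior_of T = {}"
    proof (rule ccontr)
      assume "?X interior_of T \<noteq> {}"
      then have "?X interior_of T = {t}" using interior_of_subset[of ?X T] t by blast
      then have "openin ?X {t}" by (metis openin_interior_of)
      then obtain U where U: "open U" "{t} = P \<inter> U" by (auto simp: openin_open)
      then show False using lim[OF t(1)] unfolding islimpt_def by blast
    qed
    ultimately show ?thesis by blast
  qed
  have A: "?X interior_of \<Union>((\<lambda>t. {t}) ` P) = {}"
    apply (rule Baire_category_alt)
      apply (rule disjI1, rule cm)
     apply (simp add: cP)
    apply (rule ct, assumption)
    done
  have eqU: "\<Union>((\<lambda>t. {t}) ` P) = P" by blast
  have B: "?X interior_of P = P" using interior_of_topspace[of ?X] by simp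
  have "?X interior_of P = {}" using A unfolding eqU .
  with B assms(2) show False by simp
qed

type_synonym code = "nat \<Rightarrow> nat \<Rightarrow> real"

lemma code_lepoll: "(UNIV::code set) \<lesssim> (UNIV::real set)"
proof -
  have "(UNIV::real set) \<approx> (UNIV::nat set set)"
    using nat_sets_eqpoll_reals eqpoll_sym by blast
  then obtain h :: "real \<Rightarrow> nat set" where h: "inj h"
    unfolding eqpoll_def bij_betw_def by blast
  obtain g :: "nat set \<Rightarrow> real" where g: "inj g"
    using nat_sets_eqpoll_reals unfolding eqpoll_def bij_betw_def by blast
  define enc :: "code \<Rightarrow> nat set" where
    "enc c = {prod_encode (i, prod_encode (j,k)) | i j k. k \<in> h (c i j)}" for c
  have mem: "prod_encode (i, prod_encode (j,k)) \<in> enc c \<longleftrightarrow> k \<in> h (c i j)" for i j k c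
  proof
    assume "prod_encode (i, prod_encode (j,k)) \<in> enc c"
    then obtain i' j' k' where "prod_encode (i, prod_encode (j,k)) = prod_encode (i', prod_encode (j',k'))"
      "k' \<in> h (c i' j')" unfolding enc_def by blast
    then show "k \<in> h (c i j)" by (simp add: prod_encode_eq)
  qed (auto simp: enc_def)
  have ie: "inj enc"
  proof (rule injI)
    fix c c' assume "enc c = enc c'"
    then have "h (c i j) = h (c' i j)" for i j using mem by blast
    then show "c = c'" by (intro ext) (simp add: inj_eq[OF h])
  qed
  have "inj (g \<circ> enc)" by (rule inj_compose[OF g ie])
  then show ?thesis unfolding lepoll_def by (intro exI[of _ "g \<circ> enc"] conjI) simp_all
qed

lemma closed_dense_seq:
  assumes "closed C" "C \<noteq> {}"
  shows "\<exists>d::nat \<Rightarrow> real. closure (range d) = C"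
proof -
  obtain B :: "real set set" where B: "countable B" "topological_basis B"
    using ex_countable_basis by blast
  define D where "D = (\<lambda>T. SOME t. t \<in> T \<inter> C) ` {T\<in>B. T \<inter> C \<noteq> {}}"
  have cD: "countable D" unfolding D_def using B(1) by simp
  have DC: "D \<subseteq> C"
  proof
    fix t assume "t \<in> D"
    then obtain T where T: "T \<inter> C \<noteq> {}" "t = (SOME t. t \<in> T \<inter> C)" unfolding D_def by blast
    then have "t \<in> T \<inter> C" using someI_ex[of "\<lambda>t. t \<in> T \<inter> C"] by blast
    then show "t \<in> C" by blast
  qed
  have dense: "\<exists>d\<in>D. d \<in> S" if SS: "open S" "x \<in> S" "x \<in> C" for S x
  proof -
    obtain T where T: "T \<in> B" "x \<in> T" "T \<subseteq> S" using topological_basisE[OF B(2) SS(1,2)] by blast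
    have ne: "T \<inter> C \<noteq> {}" using T SS(3) by blast
    define t where "t = (SOME t. t \<in> T \<inter> C)"
    have "t \<in> T \<inter> C" unfolding t_def using someI_ex[of "\<lambda>t. t \<in> T \<inter> C"] ne by blast
    moreover have "t \<in> D" unfolding D_def t_def using T(1) ne by blast
    ultimately show ?thesis using T(3) by blast
  qed
  have ne: "D \<noteq> {}"
  proof -
    obtain x where "x \<in> C" using assms(2) by blast
    then show ?thesis using dense[of UNIV x] by blast
  qed
  have "closure D = C"
  proof
    show "closure D \<subseteq> C" using assms(1) DC by (simp add: closure_minimal)
    show "C \<subseteq> closure D"
    proof
      fix x assume x: "x \<in> C"
      show "x \<in> closure D"
        unfolding closure_iff_nhds_not_empty
      proof (intro allI impI ballI)
        fix A S assume "S \<subseteq> A" "open S" "x \<in> S"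
        then obtain d where "d \<in> D" "d \<in> S" using dense x by blast
        then show "D \<inter> A \<noteq> {}" using \<open>S \<subseteq> A\<close> by blast
      qed
    qed
  qed
  then show ?thesis using ne cD
    by (intro exI[of _ "from_nat_into D"]) simp
qed

definition sm :: "real set \<Rightarrow> real set \<Rightarrow> real set" where
  "sm A B = (\<lambda>(a,b). a + b) ` (A \<times> B)"

lemma countable_sm: assumes "countable A" "countable B" shows "countable (sm A B)"
proof -
  have "countable (A \<times> B)" using assms by simp
  then show ?thesis unfolding sm_def by (rule countable_image)
qed

lemma uncountable_avoid:
  assumes "uncountable Q" "countable C" obtains q where "q \<in> Q" "q \<notin> C"
proof -
  have "\<not> Q \<subseteq> C"
  proof
    assume "Q \<subseteq> C"
    then have "countable Q" by (rule countable_subset) (rule assms(2))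
    then show False using assms(1) by simp
  qed
  then show ?thesis using that by blast
qed

lemma stage_exists:
  fixes Lp Zp Mb Q :: "real set"
  assumes "countable Lp" "countable Zp" "smeager Mb" "uncountable Q"
  shows "\<exists>x y z. x \<notin> Mb \<and> y \<notin> Mb \<and> x \<notin> Lp \<and> x + y \<in> Q \<and> z \<in> Q \<and>
     (\<forall>a\<in>Lp\<union>{x,y}. \<forall>b\<in>Lp\<union>{x,y}. \<forall>w\<in>Zp\<union>{z}. (a=x \<or> a=y \<or> b=x \<or> b=y \<or> w=z) \<longrightarrow> a+b \<noteq> w)"
proof -
  obtain p where p: "p \<in> Q" "p \<notin> Zp" by (rule uncountable_avoid[OF assms(4) assms(2)])
  have cs: "countable (sm Lp Lp \<union> {p})" using countable_sm[OF assms(1) assms(1)] by simp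
  obtain z where z: "z \<in> Q" "z \<notin> sm Lp Lp \<union> {p}"
    by (rule uncountable_avoid[OF assms(4) cs])
  define Z' where "Z' = insert z Zp"
  have cZ: "countable Z'" using assms(2) Z'_def by simp
  define A2 where "A2 = (\<lambda>(w,b). w - b) ` (Z' \<times> Lp)"
  define A3 where "A3 = (\<lambda>(w,b). p + b - w) ` (Z' \<times> Lp)"
  define A4 where "A4 = (\<lambda>w. w / 2) ` Z'"
  define A5 where "A5 = (\<lambda>w. p - w / 2) ` Z'"
  define Cn where "Cn = Lp \<union> A2 \<union> A3 \<union> A4 \<union> A5"
  have "countable A2" unfolding A2_def using cZ assms(1) by simp
  moreover have "countable A3" unfolding A3_def using cZ assms(1) by simp
  moreover have "countable A4" unfolding A4_def using cZ by simp
  moreover have "countable A5" unfolding A5_def using cZ by simp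
  ultimately have "countable Cn" unfolding Cn_def using assms(1) by simp
  define X where "X = Mb \<union> (\<lambda>t. p - t) ` Mb \<union> Cn"
  have s1: "smeager (Mb \<union> (\<lambda>t. p - t) ` Mb)"
    by (rule smeager_Un[OF assms(3) smeager_reflect[OF assms(3)]])
  have s2: "smeager X" unfolding X_def
    by (rule smeager_Un[OF s1 smeager_countable[OF \<open>countable Cn\<close>]])
  have "\<exists>x. x \<notin> X"
  proof (rule ccontr)
    assume "\<nexists>x. x \<notin> X"
    then have "UNIV \<subseteq> X" by blast
    then have "smeager UNIV" by (rule smeager_mono[OF s2])
    then show False using not_smeager_UNIV by blast
  qed
  then obtain x where x: "x \<notin> X" by blast
  have xCn: "x \<notin> Cn" using x unfolding X_def by blast
  define y where "y = p - x"
  have xM: "x \<notin> Mb" using x unfolding X_def by blast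
  have yM: "y \<notin> Mb"
  proof
    assume "y \<in> Mb"
    then have "p - y \<in> (\<lambda>t. p - t) ` Mb" by (rule imageI)
    moreover have "p - y = x" using y_def by simp
    ultimately have "x \<in> X" unfolding X_def by blast
    then show False using x by blast
  qed
  have xL: "x \<notin> Lp" using xCn unfolding Cn_def by blast
  have xy: "x + y = p" using y_def by simp
  have c1: "x + b \<noteq> w" if "b \<in> Lp" "w \<in> Z'" for b w
  proof
    assume "x + b = w"
    then have "x = (\<lambda>(w,b). w - b) (w, b)" by simp
    moreover have "(w,b) \<in> Z' \<times> Lp" using that by simp
    ultimately have "x \<in> A2" unfolding A2_def by (rule image_eqI)
    then show False using xCn unfolding Cn_def by blast
  qed
  have c2: "y + b \<noteq> w" if "b \<in> Lp" "w \<in> Z'" for b w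
  proof
    assume "y + b = w"
    then have "x = (\<lambda>(w,b). p + b - w) (w, b)" using y_def by simp
    moreover have "(w,b) \<in> Z' \<times> Lp" using that by simp
    ultimately have "x \<in> A3" unfolding A3_def by (rule image_eqI)
    then show False using xCn unfolding Cn_def by blast
  qed
  have c3: "x + x \<noteq> w" if "w \<in> Z'" for w
  proof
    assume "x + x = w"
    then have "x = w / 2" by simp
    then have "x \<in> A4" unfolding A4_def using that by (rule image_eqI)
    then show False using xCn unfolding Cn_def by blast
  qed
  have c4: "y + y \<noteq> w" if "w \<in> Z'" for w
  proof
    assume "y + y = w"
    then have "x = p - w / 2" using y_def by simp
    then have "x \<in> A5" unfolding A5_def using that by (rule image_eqI)
    then show False using xCn unfolding Cn_def by blast
  qed
  have c5: "x + y \<noteq> w" "y + x \<noteq> w" if "w \<in> Z'" for w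
    using that p z xy unfolding Z'_def by (auto simp: add.commute)
  have c6: "a + b \<noteq> z" if "a \<in> Lp" "b \<in> Lp" for a b
  proof
    assume "a + b = z"
    then have "z = (\<lambda>(a,b). a+b) (a,b)" by simp
    moreover have "(a,b) \<in> Lp \<times> Lp" using that by simp
    ultimately have "z \<in> sm Lp Lp" unfolding sm_def by (rule image_eqI)
    then show False using z by blast
  qed
  have Z'I: "w \<in> Zp \<union> {z} \<Longrightarrow> w \<in> Z'" for w unfolding Z'_def by blast
  show ?thesis
  proof (rule exI[of _ x], rule exI[of _ y], rule exI[of _ z], intro conjI)
    show "x \<notin> Mb" by (rule xM)
    show "y \<notin> Mb" by (rule yM)
    show "x \<notin> Lp" by (rule xL)
    show "x + y \<in> Q" using xy p by simp
    show "z \<in> Q" by (rule z(1))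
    show "\<forall>a\<in>Lp\<union>{x,y}. \<forall>b\<in>Lp\<union>{x,y}. \<forall>w\<in>Zp\<union>{z}. (a=x \<or> a=y \<or> b=x \<or> b=y \<or> w=z) \<longrightarrow> a+b \<noteq> w"
    proof (intro ballI impI)
      fix a b w assume a: "a \<in> Lp\<union>{x,y}" and b: "b \<in> Lp\<union>{x,y}" and w: "w \<in> Zp\<union>{z}"
        and new: "a=x \<or> a=y \<or> b=x \<or> b=y \<or> w=z"
      have w': "w \<in> Z'" using Z'I w .
      have aa: "a \<in> Lp \<or> a = x \<or> a = y" using a by blast
      have bb: "b \<in> Lp \<or> b = x \<or> b = y" using b by blast
      show "a + b \<noteq> w"
      proof (cases "a = x")
        case True
        then show ?thesis using bb c1[OF _ w'] c3[OF w'] c5(1)[OF w'] by auto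
      next
        case ax: False
        show ?thesis
        proof (cases "a = y")
          case True
          then show ?thesis using bb c2[OF _ w'] c4[OF w'] c5(2)[OF w'] by auto
        next
          case ay: False
          then have aL: "a \<in> Lp" using aa ax by blast
          show ?thesis
          proof (cases "b = x")
            case True
            then show ?thesis using c1[OF aL w'] by (simp add: add.commute)
          next
            case bx: False
            show ?thesis
            proof (cases "b = y")
              case True
              then show ?thesis using c2[OF aL w'] by (simp add: add.commute)
            next
              case by': False
              then have "b \<in> Lp" "w = z" using bb bx new ax ay by auto
              then show ?thesis using c6[OF aL] by simp
            qed
          qed
        qed
      qed
    qed
  qed
qed

definition Mc :: "code \<Rightarrow> real set" where
  "Mc c = (\<Union>n. if interior (closure (range (c n))) = {} then closure (range (c n)) else {})"

lemma smeager_Mc: "smeager (Mc c)"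
proof (rule smeagerI[of "range (\<lambda>n. if interior (closure (range (c n))) = {} then closure (range (c n)) else {})"])
  show "countable (range (\<lambda>n. if interior (closure (range (c n))) = {} then closure (range (c n)) else {}))"
    by simp
  show "Mc c \<subseteq> \<Union> (range (\<lambda>n. if interior (closure (range (c n))) = {} then closure (range (c n)) else {}))"
    unfolding Mc_def by (rule subset_refl)
  fix T assume "T \<in> range (\<lambda>n. if interior (closure (range (c n))) = {} then closure (range (c n)) else {})"
  then obtain n where n: "T = (if interior (closure (range (c n))) = {} then closure (range (c n)) else {})"
    by blast
  show "closed T" unfolding n by simp
  show "interior T = {}" unfolding n by simp
qed

definition Pc :: "code \<Rightarrow> real set" where
  "Pc c = closure (range (c 0))"

definition Qc :: "code \<Rightarrow> real set" where
  "Qc c = (if perfect_set (Pc c) \<and> Pc c \<noteq> {} then Pc c else UNIV)"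

lemma uncountable_Qc: "uncountable (Qc c)"
proof (cases "perfect_set (Pc c) \<and> Pc c \<noteq> {}")
  case True
  then have "Qc c = Pc c" unfolding Qc_def by (rule if_P)
  then show ?thesis using perfect_uncountable True by simp
next
  case False
  then have "Qc c = UNIV" unfolding Qc_def by (rule if_not_P)
  then show ?thesis using uncountable_UNIV_real by simp
qed

definition predR :: "real rel \<Rightarrow> real \<Rightarrow> real set" where
  "predR R a = {b. (b, a) \<in> R}"

definition Lpre :: "real rel \<Rightarrow> (real \<Rightarrow> real \<times> real \<times> real) \<Rightarrow> real \<Rightarrow> real set" where
  "Lpre R f a = (\<lambda>b. fst (f b)) ` predR R a \<union> (\<lambda>b. fst (snd (f b))) ` predR R a"

definition Zpre :: "real rel \<Rightarrow> (real \<Rightarrow> real \<times> real \<times> real) \<Rightarrow> real \<Rightarrow> real set" where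
  "Zpre R f a = (\<lambda>b. snd (snd (f b))) ` predR R a"

definition Mbig :: "real rel \<Rightarrow> (real \<Rightarrow> code) \<Rightarrow> real \<Rightarrow> real set" where
  "Mbig R cod a = (\<Union>b\<in>insert a (predR R a). Mc (cod b))"

definition good :: "real rel \<Rightarrow> (real \<Rightarrow> code) \<Rightarrow> (real \<Rightarrow> real \<times> real \<times> real) \<Rightarrow> real \<Rightarrow> real \<Rightarrow> real \<Rightarrow> real \<Rightarrow> bool" where
  "good R cod f a x y z \<longleftrightarrow> x \<notin> Mbig R cod a \<and> y \<notin> Mbig R cod a \<and> x \<notin> Lpre R f a \<and>
     x + y \<in> Qc (cod a) \<and> z \<in> Qc (cod a) \<and>
     (\<forall>u\<in>Lpre R f a \<union> {x,y}. \<forall>v\<in>Lpre R f a \<union> {x,y}. \<forall>w\<in>Zpre R f a \<union> {z}.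
        (u=x \<or> u=y \<or> v=x \<or> v=y \<or> w=z) \<longrightarrow> u+v \<noteq> w)"

lemma Lpre_cut: "Lpre R (cut f R a) a = Lpre R f a"
proof -
  have "(\<lambda>b. fst (cut f R a b)) ` predR R a = (\<lambda>b. fst (f b)) ` predR R a"
    by (rule image_cong) (simp_all add: predR_def cut_apply)
  moreover have "(\<lambda>b. fst (snd (cut f R a b))) ` predR R a = (\<lambda>b. fst (snd (f b))) ` predR R a"
    by (rule image_cong) (simp_all add: predR_def cut_apply)
  ultimately show ?thesis unfolding Lpre_def by simp
qed

lemma Zpre_cut: "Zpre R (cut f R a) a = Zpre R f a"
  unfolding Zpre_def by (rule image_cong) (simp_all add: predR_def cut_apply)

lemma good_cut: "good R cod (cut f R a) a x y z = good R cod f a x y z"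
  unfolding good_def Lpre_cut Zpre_cut by (rule refl)

lemma good_exists:
  assumes "countable (predR R a)"
  shows "\<exists>t. good R cod f a (fst t) (fst (snd t)) (snd (snd t))"
proof -
  have cL: "countable (Lpre R f a)" unfolding Lpre_def using assms by simp
  have cZ: "countable (Zpre R f a)" unfolding Zpre_def using assms by simp
  have sM: "smeager (Mbig R cod a)" unfolding Mbig_def
    by (rule smeager_UN) (use assms smeager_Mc in simp_all)
  obtain x y z where xyz: "x \<notin> Mbig R cod a \<and> y \<notin> Mbig R cod a \<and> x \<notin> Lpre R f a \<and> x + y \<in> Qc (cod a) \<and> z \<in> Qc (cod a) \<and>
     (\<forall>u\<in>Lpre R f a \<union> {x,y}. \<forall>v\<in>Lpre R f a \<union> {x,y}. \<forall>w\<in>Zpre R f a \<union> {z}.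
        (u=x \<or> u=y \<or> v=x \<or> v=y \<or> w=z) \<longrightarrow> u+v \<noteq> w)"
    using stage_exists[OF cL cZ sM uncountable_Qc[of "cod a"]] by (elim exE) blast
  have "good R cod f a x y z" unfolding good_def by (rule xyz)
  then show ?thesis by (intro exI[of _ "(x,y,z)"]) simp
qed

lemma index_set:
  assumes ch: "CH" and wf: "wf R"
  shows "\<exists>I::real set. I \<approx> (UNIV::real set) \<and> (\<forall>a\<in>I. countable (predR R a))"
proof (cases "\<forall>x. countable (predR R x)")
  case True
  then show ?thesis by (intro exI[of _ UNIV]) (simp add: eqpoll_refl)
next
  case False
  then obtain x where x: "x \<in> {x. uncountable (predR R x)}" by blast
  obtain z where z: "z \<in> {x. uncountable (predR R x)}" "\<And>y. (y, z) \<in> R \<Longrightarrow> y \<notin> {x. uncountable (predR R x)}"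
    by (rule wfE_min[OF wf x]) blast
  have "countable (predR R z) \<or> predR R z \<approx> (UNIV::real set)" using ch unfolding CH_def by blast
  then have eq: "predR R z \<approx> (UNIV::real set)" using z(1) by blast
  have "\<forall>a\<in>predR R z. countable (predR R a)"
  proof
    fix a assume "a \<in> predR R z"
    then have "(a, z) \<in> R" unfolding predR_def by simp
    then show "countable (predR R a)" using z(2) by blast
  qed
  then show ?thesis using eq by blast
qed

lemma code_surj_index:
  fixes I :: "real set"
  assumes "I \<approx> (UNIV::real set)"
  shows "\<exists>cod::real \<Rightarrow> code. \<forall>c. \<exists>a\<in>I. cod a = c"
proof -
  obtain f where f: "bij_betw f I (UNIV::real set)" using assms unfolding eqpoll_def by blast
  obtain g :: "code \<Rightarrow> real" where g: "inj g" using code_lepoll unfolding lepoll_def by blast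
  have H: "\<exists>a\<in>I. inv g (f a) = c" for c
  proof -
    have fI: "f ` I = UNIV" using f by (rule bij_betw_imp_surj_on)
    have "g c \<in> f ` I" unfolding fI by (rule UNIV_I)
    then obtain a where a: "g c = f a" "a \<in> I" by (rule imageE)
    have "inv g (f a) = c" unfolding a(1)[symmetric] by (rule inv_f_f[OF g])
    then show ?thesis using a(2) by (rule bexI)
  qed
  show ?thesis
  proof (rule exI[of _ "\<lambda>a. inv g (f a)"], rule allI)
    fix c show "\<exists>a\<in>I. inv g (f a) = c" by (rule H)
  qed
qed

lemma max3:
  assumes tot: "\<And>a b. a = b \<or> (a,b) \<in> R \<or> (b,a) \<in> R"
    and tr: "\<And>a b c. (a,b) \<in> R \<Longrightarrow> (b,c) \<in> R \<Longrightarrow> (a,c) \<in> R"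
  shows "\<exists>m. (m = a1 \<or> m = a2 \<or> m = a3) \<and> (a1 = m \<or> (a1,m) \<in> R) \<and> (a2 = m \<or> (a2,m) \<in> R) \<and> (a3 = m \<or> (a3,m) \<in> R)"
proof -
  define m1 where "m1 = (if (a1,a2) \<in> R then a2 else a1)"
  have h1: "a1 = m1 \<or> (a1,m1) \<in> R" unfolding m1_def by simp
  have h2: "a2 = m1 \<or> (a2,m1) \<in> R" unfolding m1_def using tot[of a1 a2] by auto
  have h0: "m1 = a1 \<or> m1 = a2" unfolding m1_def by simp
  define m where "m = (if (m1,a3) \<in> R then a3 else m1)"
  have k3: "a3 = m \<or> (a3,m) \<in> R" unfolding m_def using tot[of m1 a3] by auto
  have k1: "a1 = m \<or> (a1,m) \<in> R"
  proof (cases "(m1,a3) \<in> R")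
    case True
    then have "m = a3" unfolding m_def by simp
    then show ?thesis using h1 True tr by auto
  next
    case False
    then have "m = m1" unfolding m_def by simp
    then show ?thesis using h1 by simp
  qed
  have k2: "a2 = m \<or> (a2,m) \<in> R"
  proof (cases "(m1,a3) \<in> R")
    case True
    then have "m = a3" unfolding m_def by simp
    then show ?thesis using h2 True tr by auto
  next
    case False
    then have "m = m1" unfolding m_def by simp
    then show ?thesis using h2 by simp
  qed
  have "m = a1 \<or> m = a2 \<or> m = a3" unfolding m_def using h0 by auto
  then show ?thesis using k1 k2 k3 by blast
qed

lemma memL: "a \<in> X ` I \<union> Y ` I \<Longrightarrow> \<exists>a1\<in>I. a = X a1 \<or> a = Y a1"
  by auto

theorem mainTheorem17:
  assumes "CH"
  shows "\<exists>L. Luzin_set L \<and> Bernstein_set (sumset L L)"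
proof -
  obtain r :: "real rel" where r: "Well_order r \<and> Field r = UNIV" using well_ordering by (rule exE)
  have Fr: "Field r = UNIV" using r by (rule conjunct2)
  have wo: "well_order_on UNIV r" using r[THEN conjunct1] unfolding Fr .
  have lw: "linear_order_on UNIV r \<and> wf (r - Id)" using wo unfolding well_order_on_def .
  have tr_r: "trans r" and as_r: "antisym r" and tot_r: "total_on UNIV r"
    using lw unfolding linear_order_on_def partial_order_on_def preorder_on_def by simp_all
  define R where "R = r - Id"
  have wfR: "wf R" using lw unfolding R_def by simp
  have tot: "a = b \<or> (a,b) \<in> R \<or> (b,a) \<in> R" for a b
  proof (cases "a = b")
    case True then show ?thesis by simp
  next
    case False
    then have "(a,b) \<in> r \<or> (b,a) \<in> r" using tot_r unfolding total_on_def by simp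
    then show ?thesis using False unfolding R_def by auto
  qed
  have tr: "(a,c) \<in> R" if ab: "(a,b) \<in> R" and bc: "(b,c) \<in> R" for a b c
  proof -
    have ab': "(a,b) \<in> r" "a \<noteq> b" using ab unfolding R_def by auto
    have bc': "(b,c) \<in> r" "b \<noteq> c" using bc unfolding R_def by auto
    have ac: "(a,c) \<in> r" using transD[OF tr_r ab'(1) bc'(1)] .
    have "a \<noteq> c"
    proof
      assume "a = c"
      then have "(b,a) \<in> r" using bc'(1) by simp
      then have "a = b" using antisymD[OF as_r ab'(1)] by simp
      then show False using ab'(2) by simp
    qed
    then show ?thesis using ac unfolding R_def by simp
  qed
  obtain I :: "real set" where I: "I \<approx> (UNIV::real set) \<and> (\<forall>a\<in>I. countable (predR R a))"
    using index_set[OF assms wfR] by (rule exE)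
  have I1: "I \<approx> (UNIV::real set)" using I by (rule conjunct1)
  have I2: "countable (predR R a)" if "a \<in> I" for a using I that by simp
  obtain cod :: "real \<Rightarrow> code" where cod: "\<forall>c. \<exists>a\<in>I. cod a = c"
    using code_surj_index[OF I1] by (rule exE)
  define step where "step = (\<lambda>f a. SOME t. good R cod f a (fst t) (fst (snd t)) (snd (snd t)))"
  define F where "F = wfrec R step"
  define X where "X a = fst (F a)" for a
  define Y where "Y a = fst (snd (F a))" for a
  define Zz where "Zz a = snd (snd (F a))" for a
  have Fgood: "good R cod F a (X a) (Y a) (Zz a)" if aI: "a \<in> I" for a
  proof -
    have "F a = step (cut F R a) a" unfolding F_def by (rule wfrec[OF wfR])
    then have Fa: "F a = (SOME t. good R cod F a (fst t) (fst (snd t)) (snd (snd t)))"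
      unfolding step_def good_cut by simp
    have "\<exists>t. good R cod F a (fst t) (fst (snd t)) (snd (snd t))"
      by (rule good_exists) (rule I2[OF aI])
    then have "good R cod F a (fst (SOME t. good R cod F a (fst t) (fst (snd t)) (snd (snd t))))
       (fst (snd (SOME t. good R cod F a (fst t) (fst (snd t)) (snd (snd t)))))
       (snd (snd (SOME t. good R cod F a (fst t) (fst (snd t)) (snd (snd t)))))"
      by (rule someI_ex)
    then show ?thesis unfolding X_def Y_def Zz_def Fa[symmetric] .
  qed
  have G1: "X a \<notin> Mbig R cod a" "Y a \<notin> Mbig R cod a" "X a \<notin> Lpre R F a"
     "X a + Y a \<in> Qc (cod a)" "Zz a \<in> Qc (cod a)" if "a \<in> I" for a
    using Fgood[OF that] unfolding good_def by simp_all
  have G2: "\<forall>u\<in>Lpre R F a \<union> {X a, Y a}. \<forall>v\<in>Lpre R F a \<union> {X a, Y a}. \<forall>w\<in>Zpre R F a \<union> {Zz a}.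
        (u = X a \<or> u = Y a \<or> v = X a \<or> v = Y a \<or> w = Zz a) \<longrightarrow> u+v \<noteq> w" if "a \<in> I" for a
    using Fgood[OF that] unfolding good_def by (elim conjE)
  have inLX: "X b \<in> Lpre R F a" if "(b,a) \<in> R" for a b
    unfolding Lpre_def X_def by (rule UnI1, rule imageI[of _ _ "\<lambda>b. fst (F b)"]) (simp add: predR_def that)
  have inLY: "Y b \<in> Lpre R F a" if "(b,a) \<in> R" for a b
    unfolding Lpre_def Y_def by (rule UnI2, rule imageI[of _ _ "\<lambda>b. fst (snd (F b))"]) (simp add: predR_def that)
  have inZ: "Zz b \<in> Zpre R F a" if "(b,a) \<in> R" for a b
    unfolding Zpre_def Zz_def by (rule imageI[of _ _ "\<lambda>b. snd (snd (F b))"]) (simp add: predR_def that)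
  have inM: "Mc (cod b) \<subseteq> Mbig R cod a" if "(b,a) \<in> R" for a b
    unfolding Mbig_def by (rule UN_upper) (simp add: predR_def that)
  define L where "L = X ` I \<union> Y ` I"
  have key: "a + b \<noteq> Zz d" if aL: "a \<in> L" and bL: "b \<in> L" and dI: "d \<in> I" for a b d
  proof -
    obtain a1 where a1: "a1 \<in> I" "a = X a1 \<or> a = Y a1" using memL[OF aL[unfolded L_def]] by (rule bexE)
    obtain a2 where a2: "a2 \<in> I" "b = X a2 \<or> b = Y a2" using memL[OF bL[unfolded L_def]] by (rule bexE)
    obtain m where m: "(m = a1 \<or> m = a2 \<or> m = d) \<and> (a1 = m \<or> (a1,m) \<in> R) \<and> (a2 = m \<or> (a2,m) \<in> R) \<and> (d = m \<or> (d,m) \<in> R)"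
      using max3[of R a1 a2 d, OF tot tr] by (rule exE)
    have mI: "m \<in> I" using m a1(1) a2(1) dI by auto
    have aM: "a \<in> Lpre R F m \<union> {X m, Y m}"
    proof (cases "a1 = m")
      case True then show ?thesis using a1(2) by auto
    next
      case False
      then have "(a1,m) \<in> R" using m by simp
      then show ?thesis using a1(2) inLX inLY by auto
    qed
    have bM: "b \<in> Lpre R F m \<union> {X m, Y m}"
    proof (cases "a2 = m")
      case True then show ?thesis using a2(2) by auto
    next
      case False
      then have "(a2,m) \<in> R" using m by simp
      then show ?thesis using a2(2) inLX inLY by auto
    qed
    have dM: "Zz d \<in> Zpre R F m \<union> {Zz m}"
    proof (cases "d = m")
      case True then show ?thesis by simp
    next
      case False
      then have "(d,m) \<in> R" using m by simp
      then show ?thesis using inZ by auto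
    qed
    have new: "a = X m \<or> a = Y m \<or> b = X m \<or> b = Y m \<or> Zz d = Zz m"
      using m a1(2) a2(2) by auto
    have "(a = X m \<or> a = Y m \<or> b = X m \<or> b = Y m \<or> Zz d = Zz m) \<longrightarrow> a + b \<noteq> Zz d"
      using bspec[OF bspec[OF bspec[OF G2[OF mI] aM] bM] dM] .
    then show ?thesis using new by (rule mp)
  qed
  have injX: "inj_on X I"
  proof (rule inj_onI)
    fix a b assume a: "a \<in> I" and b: "b \<in> I" and eq: "X a = X b"
    show "a = b"
    proof (rule ccontr)
      assume ne: "a \<noteq> b"
      then have "(a,b) \<in> R \<or> (b,a) \<in> R" using tot[of a b] by simp
      then show False
      proof
        assume "(a,b) \<in> R"
        then have "X a \<in> Lpre R F b" by (rule inLX)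
        then show False using G1(3)[OF b] eq by simp
      next
        assume "(b,a) \<in> R"
        then have "X b \<in> Lpre R F a" by (rule inLX)
        then show False using G1(3)[OF a] eq by simp
      qed
    qed
  qed
  have Leq: "L \<approx> (UNIV::real set)"
  proof (rule lepoll_antisym)
    show "L \<lesssim> (UNIV::real set)" by (rule subset_imp_lepoll) simp
    have "I \<lesssim> L" unfolding lepoll_def L_def
      by (rule exI[of _ X]) (simp add: injX)
    moreover have "(UNIV::real set) \<lesssim> I" by (rule eqpoll_imp_lepoll[OF eqpoll_sym[OF I1]])
    ultimately show "(UNIV::real set) \<lesssim> L" using lepoll_trans by blast
  qed
  have Luz: "countable (L \<inter> M)" if Mm: "meager M" for M
  proof -
    have sM: "smeager M" by (rule meager_smeager[OF Mm])
    obtain G :: "real set set" where G: "countable G" "\<And>T. T\<in>G \<Longrightarrow> closed T" "\<And>T. T\<in>G \<Longrightarrow> interior T = {}" "M \<subseteq> \<Union>G"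
      using sM by (rule smeagerE) blast
    show ?thesis
    proof (cases "G = {}")
      case True
      then have "M = {}" using G(4) by simp
      then show ?thesis by simp
    next
      case Gne: False
      define C where "C = from_nat_into G"
      have rC: "range C = G" unfolding C_def using Gne G(1) by simp
      define c :: code where "c n = (if C n = {} then (\<lambda>_. 0) else (SOME d. closure (range d) = C n))" for n
      have Mc: "M \<subseteq> Mc c"
      proof
        fix t assume "t \<in> M"
        then obtain T where T: "T \<in> G" "t \<in> T" using G(4) by blast
        then obtain n where n: "T = C n" using rC by blast
        have Tne: "C n \<noteq> {}" using T n by blast
        have clT: "closed (C n)" using G(2) T n by simp
        have intT: "interior (C n) = {}" using G(3) T n by simp
        have "\<exists>d::nat \<Rightarrow> real. closure (range d) = C n" by (rule closed_dense_seq[OF clT Tne])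
        then have "closure (range (SOME d::nat \<Rightarrow> real. closure (range d) = C n)) = C n" by (rule someI_ex)
        then have cl: "closure (range (c n)) = C n" unfolding c_def using Tne by simp
        have "t \<in> (if interior (closure (range (c n))) = {} then closure (range (c n)) else {})"
          unfolding cl using intT T(2) n by simp
        then show "t \<in> Mc c" unfolding Mc_def by (rule UN_I[OF UNIV_I])
      qed
      obtain al where al: "al \<in> I" "cod al = c" using cod by blast
      have sub: "L \<inter> M \<subseteq> X ` insert al (predR R al) \<union> Y ` insert al (predR R al)"
      proof
        fix t assume t: "t \<in> L \<inter> M"
        then have tL: "t \<in> X ` I \<union> Y ` I" unfolding L_def by simp
        obtain g where g: "g \<in> I" "t = X g \<or> t = Y g" using memL[OF tL] by (rule bexE)
        have "g \<in> insert al (predR R al)"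
        proof (rule ccontr)
          assume "g \<notin> insert al (predR R al)"
          then have "g \<noteq> al" "(g, al) \<notin> R" unfolding predR_def by auto
          then have "(al, g) \<in> R" using tot[of g al] by auto
          then have "Mc (cod al) \<subseteq> Mbig R cod g" by (rule inM)
          then have "t \<in> Mbig R cod g" using t Mc al(2) by blast
          then show False using G1(1,2)[OF g(1)] g(2) by auto
        qed
        then show "t \<in> X ` insert al (predR R al) \<union> Y ` insert al (predR R al)" using g(2) by auto
      qed
      have "countable (insert al (predR R al))" using I2[OF al(1)] by simp
      then have "countable (X ` insert al (predR R al) \<union> Y ` insert al (predR R al))" by simp
      then show ?thesis using sub by (rule countable_subset[rotated])
    qed
  qed
  have Bern: "sumset L L \<inter> P \<noteq> {} \<and> (UNIV - sumset L L) \<inter> P \<noteq> {}" if PP: "perfect_set P \<and> P \<noteq> {}" for P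
  proof -
    have clP: "closed P" and neP: "P \<noteq> {}" using PP unfolding perfect_set_def by simp_all
    obtain d :: "nat \<Rightarrow> real" where d: "closure (range d) = P" using closed_dense_seq[OF clP neP] by (rule exE)
    define c :: code where "c = (\<lambda>n. d)"
    have Pc: "Pc c = P" unfolding Pc_def c_def using d by simp
    have Qc: "Qc c = P" unfolding Qc_def Pc using PP by simp
    obtain al where al: "al \<in> I" "cod al = c" using cod by blast
    have s: "X al + Y al \<in> P" using G1(4)[OF al(1)] unfolding al(2) Qc .
    have z: "Zz al \<in> P" using G1(5)[OF al(1)] unfolding al(2) Qc .
    have XL: "X al \<in> L" unfolding L_def using al(1) by simp
    have YL: "Y al \<in> L" unfolding L_def using al(1) by simp
    have "X al + Y al \<in> sumset L L" unfolding sumset_def using XL YL by blast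
    then have A: "sumset L L \<inter> P \<noteq> {}" using s by blast
    have "Zz al \<notin> sumset L L"
    proof
      assume "Zz al \<in> sumset L L"
      then obtain a b where ab: "Zz al = a + b" "a \<in> L" "b \<in> L" unfolding sumset_def by blast
      then show False using key[OF ab(2) ab(3) al(1)] by simp
    qed
    then have B: "(UNIV - sumset L L) \<inter> P \<noteq> {}" using z by blast
    show ?thesis using A B by (rule conjI)
  qed
  have "Luzin_set L" unfolding Luzin_set_def using Leq Luz by blast
  moreover have "Bernstein_set (sumset L L)" unfolding Bernstein_set_def using Bern by blast
  ultimately show ?thesis by blast
qed

end
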